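(* Let $X$ be an extensible marked Dynkin diagram with $d$ nodes, and let $\gamma=(x,y)\in\mathcal H_2$ with $|\gamma|_X=0$. Let $l=\max(\ell(x),d)$ and $r=\ell(y)$. Then there exist integers $p_i$ ($1\le i\le l-1$), $q_j$ ($1\le j\le r-1$) and $s$ such that for all $n\ge l+r$, $$\gamma^{(n)}=\sum_{i=1}^{l-1}p_i\alpha_i^{(n)}+\sum_{i=l}^{n-r+1}s\,\alpha_i^{(n)}+\sum_{i=n-r+2}^{n}q_{n-i+1}\alpha_i^{(n)}.$$
   Context: A marked Dynkin diagram $X$ has nodes $1,\dots,d$ with node $d$ distinguished and symmetrizable generalized Cartan matrix $C(X)$. For $n\ge d$, $X_n$ is obtained by attaching a simply-laced chain of new nodes $d+1,\dots,n$ to node $d$ (so $C(X_n)$ has $C(X)$ as upper-left block, $2$ on the remaining diagonal, $-1$ in positions $(i,i+1),(i+1,i)$ for $d\le i<n$, $0$ elsewhere); $X_{d-1}$ is $X$ with node $d$ deleted. $\det(Y)$ is the determinant of the generalized Cartan matrix of $Y$. The sequence $\det(X_n)$, $n\ge d$, is arithmetic with common difference $\Delta$; $X$ is extensible if $\Delta\ne0$, $\det(X)\ne0$ and $\gcd(\Delta,\det X)=1$. For $\mathfrak g(X_n)$: simple roots $\alpha_i^{(n)}$, fundamental weights $\omega_i^{(n)}$, $\overline{\omega}_i^{(n)}=\omega_{n-i+1}^{(n)}$. $\mathcal H_1$ is the set of finitely supported integer sequences, $\ell(x)=\max\{i:x_i\ne0\}$, $\mathcal H_2=\mathcal H_1\times\mathcal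 H_1$; for $\gamma=(x,y)$ and $n\ge\ell(y)+\max(d,\ell(x))$, $\gamma^{(n)}=\sum_ix_i\omega_i^{(n)}+\sum_iy_i\overline{\omega}_i^{(n)}$. Integers $a_i$: for $1\le i\le d$, $a_i=\det(X)(C(X)^{-1})_{d\,i}$; for $i>d$, $a_i=\det(X_{i-1})$. $|\gamma|_X=\sum_ia_ix_i-\Delta\sum_i i\,y_i$. *)

theory Defs
  imports "Jordan_Normal_Form.Determinant"
begin

text \<open>A marked Dynkin diagram X with nodes 1..d is given by its generalized Cartan
matrix C :: nat => nat => int, of which only the entries with indices in 1..d matter;
node d is the marked node.\<close>

definition is_gcm :: "(nat \<Rightarrow> nat \<Rightarrow> int) \<Rightarrow> nat \<Rightarrow> bool" where
  "is_gcm C d \<longleftrightarrow>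
     (\<forall>i\<in>{1..d}. C i i = 2) \<and>
     (\<forall>i\<in>{1..d}. \<forall>j\<in>{1..d}. i \<noteq> j \<longrightarrow> C i j \<le> 0) \<and>
     (\<forall>i\<in>{1..d}. \<forall>j\<in>{1..d}. C i j = 0 \<longleftrightarrow> C j i = 0)"

definition symmetrizable :: "(nat \<Rightarrow> nat \<Rightarrow> int) \<Rightarrow> nat \<Rightarrow> bool" where
  "symmetrizable C d \<longleftrightarrow>
     (\<exists>e :: nat \<Rightarrow> rat. (\<forall>i\<in>{1..d}. e i > 0) \<and>
        (\<forall>i\<in>{1..d}. \<forall>j\<in>{1..d}. e i * of_int (C i j) = e j * of_int (C j i)))"

text \<open>Cartan matrix of X_n (n >= d): C as upper-left block, a simply-laced chain
d - (d+1) - ... - n attached at node d.\<close>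

definition cartan_ext :: "(nat \<Rightarrow> nat \<Rightarrow> int) \<Rightarrow> nat \<Rightarrow> nat \<Rightarrow> nat \<Rightarrow> int" where
  "cartan_ext C d i j =
     (if i \<le> d \<and> j \<le> d then C i j
      else if i = j then 2
      else if (i = j + 1 \<or> j = i + 1) \<and> d \<le> min i j then -1
      else 0)"

text \<open>The Cartan matrix of X_n as an n x n matrix (0-based indices in the library).
For n = d this is C(X); for n = d - 1 it is C(X) with node d deleted.\<close>

definition cartan_mat :: "(nat \<Rightarrow> nat \<Rightarrow> int) \<Rightarrow> nat \<Rightarrow> nat \<Rightarrow> int mat" where
  "cartan_mat C d n = mat n n (\<lambda>(i, j). cartan_ext C d (i + 1) (j + 1))"

definition detX :: "(nat \<Rightarrow> nat \<Rightarrow> int) \<Rightarrow> nat \<Rightarrow> nat \<Rightarrow> int" where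
  "detX C d n = det (cartan_mat C d n)"

text \<open>Common difference of the arithmetic sequence det(X_n), n >= d.\<close>

definition Delta :: "(nat \<Rightarrow> nat \<Rightarrow> int) \<Rightarrow> nat \<Rightarrow> int" where
  "Delta C d = detX C d (d + 1) - detX C d d"

definition extensible :: "(nat \<Rightarrow> nat \<Rightarrow> int) \<Rightarrow> nat \<Rightarrow> bool" where
  "extensible C d \<longleftrightarrow> Delta C d \<noteq> 0 \<and> detX C d d \<noteq> 0 \<and> gcd (Delta C d) (detX C d d) = 1"

definition cartan_inv :: "(nat \<Rightarrow> nat \<Rightarrow> int) \<Rightarrow> nat \<Rightarrow> rat mat" where
  "cartan_inv C d = (SOME B. B \<in> carrier_mat d d \<and>
      map_mat of_int (cartan_mat C d d) * B = 1\<^sub>m d)"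

definition a_coef :: "(nat \<Rightarrow> nat \<Rightarrow> int) \<Rightarrow> nat \<Rightarrow> nat \<Rightarrow> rat" where
  "a_coef C d i = (if i \<le> d then of_int (detX C d d) * cartan_inv C d $$ (d - 1, i - 1)
                   else of_int (detX C d (i - 1)))"

text \<open>Finitely supported integer sequences indexed from 1 (the value at 0 is ignored).\<close>

definition fin_supp :: "(nat \<Rightarrow> int) \<Rightarrow> bool" where
  "fin_supp x \<longleftrightarrow> finite {i. x i \<noteq> 0}"

definition ell :: "(nat \<Rightarrow> int) \<Rightarrow> nat" where
  "ell x = Max ({0} \<union> {i. 1 \<le> i \<and> x i \<noteq> 0})"

definition gamma_norm :: "(nat \<Rightarrow> nat \<Rightarrow> int) \<Rightarrow> nat \<Rightarrow> (nat \<Rightarrow> int) \<Rightarrow> (nat \<Rightarrow> int) \<Rightarrow> rat" where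
  "gamma_norm C d x y =
     (\<Sum>i=1..ell x. a_coef C d i * of_int (x i))
     - of_int (Delta C d) * of_int (\<Sum>i=1..ell y. int i * y i)"

text \<open>Coefficient of omega_j^{(n)} in gamma^{(n)} = sum x_i omega_i + sum y_i omega_{n-i+1}.\<close>

definition gamma_coef :: "(nat \<Rightarrow> int) \<Rightarrow> (nat \<Rightarrow> int) \<Rightarrow> nat \<Rightarrow> nat \<Rightarrow> int" where
  "gamma_coef x y n j = x j + y (n + 1 - j)"

text \<open>A weight with omega-coefficients g equals sum_i c_i alpha_i^{(n)} iff
g_j = sum_i C(X_n)_{j i} c_i, since <alpha_j^vee, alpha_i> = C(X_n)_{j i}.\<close>

definition is_root_combination :: "(nat \<Rightarrow> nat \<Rightarrow> int) \<Rightarrow> nat \<Rightarrow> nat \<Rightarrow> (nat \<Rightarrow> int) \<Rightarrow> (nat \<Rightarrow> int) \<Rightarrow> bool" where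
  "is_root_combination C d n g c \<longleftrightarrow>
     (\<forall>j\<in>{1..n}. g j = (\<Sum>i=1..n. cartan_ext C d j i * c i))"

end

theory Submission
  imports Defs
begin

lemma cartan_mat_carrier: "cartan_mat C d n \<in> carrier_mat n n"
  unfolding cartan_mat_def by simp

lemma cartan_mat_idx: "i < n \<Longrightarrow> j < n \<Longrightarrow> cartan_mat C d n $$ (i,j) = cartan_ext C d (i+1) (j+1)"
  unfolding cartan_mat_def by simp

lemma delete_last: "mat_delete (cartan_mat C d (Suc k)) k k = cartan_mat C d k"
  by (rule eq_matI) (auto simp: mat_delete_def cartan_mat_def)

lemma det_rec:
  assumes "d \<ge> 1" "k \<ge> d"
  shows "detX C d (k+1) = 2 * detX C d k - detX C d (k-1)"
proof -
  define N where "N = cartan_mat C d (k+1)"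
  have N: "N \<in> carrier_mat (k+1) (k+1)" unfolding N_def by (rule cartan_mat_carrier)
  have k1: "k \<ge> 1" using assms by simp
  have "det N = (\<Sum>j<k+1. N $$ (k,j) * cofactor N k j)"
    by (rule laplace_expansion_row[OF N]) simp
  also have "\<dots> = (\<Sum>j<k-1. N $$ (k,j) * cofactor N k j) + N $$ (k,k-1) * cofactor N k (k-1)
      + N $$ (k,k) * cofactor N k k"
  proof -
    obtain m where m: "k = Suc m" using k1 by (cases k) auto
    show ?thesis unfolding m by (simp add: algebra_simps)
  qed
  also have "(\<Sum>j<k-1. N $$ (k,j) * cofactor N k j) = 0"
  proof (intro sum.neutral ballI)
    fix j assume "j \<in> {..<k-1}"
    hence j: "j < k-1" by simp
    have "N $$ (k,j) = cartan_ext C d (k+1) (j+1)" using j unfolding N_def by (simp add: cartan_mat_idx)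
    also have "\<dots> = 0" using j assms unfolding cartan_ext_def by auto
    finally show "N $$ (k,j) * cofactor N k j = 0" by simp
  qed
  also have "N $$ (k,k) = 2" using assms by (simp add: N_def cartan_mat_idx cartan_ext_def)
  also have "N $$ (k,k-1) = -1" using assms by (simp add: N_def cartan_mat_idx cartan_ext_def)
  also have "cofactor N k k = detX C d k"
    unfolding cofactor_def N_def detX_def using delete_last[of C d k] by simp
  also have "cofactor N k (k-1) = - det (mat_delete N k (k-1))"
  proof -
    obtain m where m: "k = Suc m" using k1 by (cases k) auto
    have "(-1::int)^(k+(k-1)) = -1" unfolding m by simp
    thus ?thesis unfolding cofactor_def by simp
  qed
  also have "det (mat_delete N k (k-1)) = - detX C d (k-1)"
  proof -
    define P where "P = mat_delete N k (k-1)"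
    have P: "P \<in> carrier_mat k k" unfolding P_def using mat_delete_carrier[OF N] by simp
    have Pidx: "P $$ (i,j) = cartan_ext C d (i+1) ((if j < k-1 then j else Suc j)+1)" if "i < k" "j < k" for i j
      using that unfolding P_def N_def mat_delete_def by (simp add: cartan_mat_def)
    have "det P = (\<Sum>i<k. P $$ (i,k-1) * cofactor P i (k-1))"
      by (rule laplace_expansion_column[OF P]) (use k1 in simp)
    also have "\<dots> = (\<Sum>i<k-1. P $$ (i,k-1) * cofactor P i (k-1)) + P $$ (k-1,k-1) * cofactor P (k-1) (k-1)"
    proof -
      obtain m where m: "k = Suc m" using k1 by (cases k) auto
      show ?thesis unfolding m by (simp add: algebra_simps)
    qed
    also have "(\<Sum>i<k-1. P $$ (i,k-1) * cofactor P i (k-1)) = 0"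
    proof (intro sum.neutral ballI)
      fix i assume "i \<in> {..<k-1}"
      hence i: "i < k-1" by simp
      have "P $$ (i,k-1) = cartan_ext C d (i+1) (k+1)" using Pidx[of i "k-1"] i k1 by simp
      also have "\<dots> = 0" using i assms unfolding cartan_ext_def by auto
      finally show "P $$ (i,k-1) * cofactor P i (k-1) = 0" by simp
    qed
    also have "P $$ (k-1,k-1) = -1"
    proof -
      have "P $$ (k-1,k-1) = cartan_ext C d k (k+1)" using Pidx[of "k-1" "k-1"] k1 by simp
      also have "\<dots> = -1" using assms unfolding cartan_ext_def by auto
      finally show ?thesis .
    qed
    also have "cofactor P (k-1) (k-1) = detX C d (k-1)"
    proof -
      have "mat_delete P (k-1) (k-1) = cartan_mat C d (k-1)"
        by (rule eq_matI) (auto simp: P_def N_def mat_delete_def cartan_mat_def)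
      thus ?thesis unfolding cofactor_def detX_def by simp
    qed
    finally show ?thesis unfolding P_def by simp
  qed
  finally show ?thesis unfolding detX_def N_def by simp
qed


lemma det_closed:
  assumes "d \<ge> 1" "k + 1 \<ge> d"
  shows "detX C d k = detX C d d + (int k - int d) * Delta C d"
proof -
  define D where "D = detX C d d"
  define L where "L = Delta C d"
  have step: "detX C d (d + m + 2) = 2 * detX C d (d + m + 1) - detX C d (d + m)" for m
  proof -
    have "detX C d (d + m + 1 + 1) = 2 * detX C d (d + m + 1) - detX C d (d + m + 1 - 1)"
      by (rule det_rec[OF assms(1)]) simp
    thus ?thesis by (simp add: add.assoc)
  qed
  have pair: "detX C d (d + m) = D + int m * L \<and> detX C d (d + m + 1) = D + (int m + 1) * L" for m
  proof (induction m)
    case 0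
    show ?case unfolding D_def L_def Delta_def by simp
  next
    case (Suc m)
    have "detX C d (d + Suc m + 1) = detX C d (d + m + 2)" by simp
    also have "\<dots> = 2 * detX C d (d + m + 1) - detX C d (d + m)" by (rule step)
    also have "\<dots> = D + (int (Suc m) + 1) * L" using Suc.IH by (simp add: algebra_simps)
    finally show ?case using Suc.IH by simp
  qed
  show ?thesis
  proof (cases "k \<ge> d")
    case True
    then obtain m where m: "k = d + m" using le_Suc_ex by blast
    show ?thesis using pair[of m] unfolding m D_def L_def by simp
  next
    case False
    hence k: "k = d - 1" "d = k + 1" using assms(2) by auto
    have "detX C d (d + 1) = 2 * detX C d d - detX C d (d - 1)"
      by (rule det_rec[OF assms(1)]) simp
    hence "detX C d k = D - L" unfolding D_def L_def Delta_def k(1) by simp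
    thus ?thesis unfolding D_def L_def using k(2) by simp
  qed
qed

lemma adj_left:
  assumes Mx: "Mx \<in> carrier_mat n n" and "i < n" "j < n"
  shows "(\<Sum>k<n. adj_mat Mx $$ (i,k) * Mx $$ (k,j)) = (if i = j then det Mx else 0)"
proof -
  have "(adj_mat Mx * Mx) $$ (i,j) = (det Mx \<cdot>\<^sub>m 1\<^sub>m n) $$ (i,j)" using adj_mat(3)[OF Mx] by simp
  moreover have "(adj_mat Mx * Mx) $$ (i,j) = (\<Sum>k<n. adj_mat Mx $$ (i,k) * Mx $$ (k,j))"
    using adj_mat(1)[OF Mx] Mx assms by (simp add: scalar_prod_def lessThan_atLeast0)
  ultimately show ?thesis using assms by simp
qed

lemma adj_right:
  assumes Mx: "Mx \<in> carrier_mat n n" and "i < n" "j < n"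
  shows "(\<Sum>k<n. Mx $$ (i,k) * adj_mat Mx $$ (k,j)) = (if i = j then det Mx else 0)"
proof -
  have "(Mx * adj_mat Mx) $$ (i,j) = (det Mx \<cdot>\<^sub>m 1\<^sub>m n) $$ (i,j)" using adj_mat(2)[OF Mx] by simp
  moreover have "(Mx * adj_mat Mx) $$ (i,j) = (\<Sum>k<n. Mx $$ (i,k) * adj_mat Mx $$ (k,j))"
    using adj_mat(1)[OF Mx] Mx assms by (simp add: scalar_prod_def lessThan_atLeast0)
  ultimately show ?thesis using assms by simp
qed

lemma base_solve:
  fixes b :: "nat \<Rightarrow> int"
  assumes d1: "d \<ge> 1" and D0: "detX C d d \<noteq> 0"
    and cop: "coprime (detX C d d) (detX C d (d-1))"
    and hyp: "(\<Sum>i<d. adj_mat (cartan_mat C d d) $$ (d-1, i) * b i) = t * detX C d d"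
  shows "\<exists>v. v (d-1) = t \<and> (\<forall>j<d. (\<Sum>k<d. cartan_mat C d d $$ (j,k) * v k) = b j)"
proof -
  define M where "M = cartan_mat C d d"
  define A where "A = adj_mat M"
  define D where "D = detX C d d"
  have M: "M \<in> carrier_mat d d" unfolding M_def by (rule cartan_mat_carrier)
  define z where "z k = (\<Sum>m<d. A $$ (k,m) * b m)" for k
  have Mz: "(\<Sum>k<d. M $$ (j,k) * z k) = D * b j" if j: "j < d" for j
  proof -
    have "(\<Sum>k<d. M $$ (j,k) * z k) = (\<Sum>k<d. \<Sum>m<d. M $$ (j,k) * A $$ (k,m) * b m)"
      unfolding z_def by (simp add: sum_distrib_left mult.assoc)
    also have "\<dots> = (\<Sum>m<d. \<Sum>k<d. M $$ (j,k) * A $$ (k,m) * b m)" by (rule sum.swap)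
    also have "\<dots> = (\<Sum>m<d. (\<Sum>k<d. M $$ (j,k) * A $$ (k,m)) * b m)" by (simp add: sum_distrib_right)
    also have "\<dots> = (\<Sum>m<d. (if j = m then D else 0) * b m)"
      using adj_right[OF M j] unfolding A_def D_def M_def detX_def by (intro sum.cong) auto
    also have "\<dots> = (\<Sum>m<d. if j = m then D * b m else 0)" by (intro sum.cong) auto
    also have "\<dots> = D * b j" using j by (simp add: sum.delta)
    finally show ?thesis .
  qed
  have zlast: "z (d-1) = t * D" using hyp unfolding z_def A_def M_def D_def .
  define M' where "M' = cartan_mat C d (d-1)"
  define A' where "A' = adj_mat M'"
  define D' where "D' = detX C d (d-1)"
  have M': "M' \<in> carrier_mat (d-1) (d-1)" unfolding M'_def by (rule cartan_mat_carrier)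
  have MM': "M' $$ (j,k) = M $$ (j,k)" if "j < d-1" "k < d-1" for j k
    using that unfolding M'_def M_def by (simp add: cartan_mat_idx)
  have dvdz: "D dvd z k" if k: "k < d-1" for k
  proof -
    have "(\<Sum>j<d-1. A' $$ (k,j) * (\<Sum>k'<d. M $$ (j,k') * z k')) = D * (\<Sum>j<d-1. A' $$ (k,j) * b j)"
      using Mz by (simp add: sum_distrib_left mult.left_commute)
    moreover have "(\<Sum>j<d-1. A' $$ (k,j) * (\<Sum>k'<d. M $$ (j,k') * z k')) =
        (\<Sum>k'<d. (\<Sum>j<d-1. A' $$ (k,j) * M $$ (j,k')) * z k')"
    proof -
      have "(\<Sum>j<d-1. A' $$ (k,j) * (\<Sum>k'<d. M $$ (j,k') * z k')) = (\<Sum>j<d-1. \<Sum>k'<d. A' $$ (k,j) * M $$ (j,k') * z k')"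
        by (simp add: sum_distrib_left mult.assoc)
      also have "\<dots> = (\<Sum>k'<d. \<Sum>j<d-1. A' $$ (k,j) * M $$ (j,k') * z k')" by (rule sum.swap)
      also have "\<dots> = (\<Sum>k'<d. (\<Sum>j<d-1. A' $$ (k,j) * M $$ (j,k')) * z k')" by (simp add: sum_distrib_right)
      finally show ?thesis .
    qed
    moreover have "\<dots> = (\<Sum>k'<d-1. (\<Sum>j<d-1. A' $$ (k,j) * M $$ (j,k')) * z k')
        + (\<Sum>j<d-1. A' $$ (k,j) * M $$ (j,d-1)) * z (d-1)"
    proof -
      obtain e where e: "d = Suc e" using d1 by (cases d) auto
      show ?thesis unfolding e by simp
    qed
    moreover have "(\<Sum>k'<d-1. (\<Sum>j<d-1. A' $$ (k,j) * M $$ (j,k')) * z k') = D' * z k"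
    proof -
      have "(\<Sum>k'<d-1. (\<Sum>j<d-1. A' $$ (k,j) * M $$ (j,k')) * z k')
          = (\<Sum>k'<d-1. (if k = k' then D' else 0) * z k')"
      proof (intro sum.cong refl)
        fix k' assume "k' \<in> {..<d-1}"
        hence k': "k' < d-1" by simp
        have "(\<Sum>j<d-1. A' $$ (k,j) * M $$ (j,k')) = (\<Sum>j<d-1. A' $$ (k,j) * M' $$ (j,k'))"
          using MM' k' by (intro sum.cong) auto
        also have "\<dots> = (if k = k' then D' else 0)"
          using adj_left[OF M' k k'] unfolding A'_def D'_def M'_def detX_def by simp
        finally show "(\<Sum>j<d-1. A' $$ (k,j) * M $$ (j,k')) * z k' = (if k = k' then D' else 0) * z k'" by simp
      qed
      also have "\<dots> = (\<Sum>k'<d-1. if k = k' then D' * z k' else 0)" by (intro sum.cong) auto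
      also have "\<dots> = D' * z k" using k by (simp add: sum.delta)
      finally show ?thesis .
    qed
    ultimately have "D' * z k = D * ((\<Sum>j<d-1. A' $$ (k,j) * b j) - (\<Sum>j<d-1. A' $$ (k,j) * M $$ (j,d-1)) * t)"
      unfolding zlast by (simp add: algebra_simps)
    hence "D dvd D' * z k" by (metis dvd_triv_left)
    moreover have "coprime D D'" using cop unfolding D_def D'_def .
    ultimately show ?thesis by (simp add: coprime_dvd_mult_right_iff)
  qed
  have dvdall: "D dvd z k" if "k < d" for k
  proof (cases "k = d-1")
    case True thus ?thesis using zlast by simp
  next
    case False thus ?thesis using that dvdz by simp
  qed
  define v where "v k = z k div D" for k
  have zv: "z k = D * v k" if "k < d" for k using dvdall[OF that] unfolding v_def by simp
  have "v (d-1) = t" unfolding v_def zlast D_def using D0 by simp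
  moreover have "(\<Sum>k<d. M $$ (j,k) * v k) = b j" if j: "j < d" for j
  proof -
    have "D * (\<Sum>k<d. M $$ (j,k) * v k) = (\<Sum>k<d. M $$ (j,k) * z k)"
      using zv by (simp add: sum_distrib_left mult.left_commute)
    also have "\<dots> = D * b j" using Mz[OF j] .
    finally show ?thesis using D0 unfolding D_def by simp
  qed
  ultimately show ?thesis unfolding M_def by blast
qed

lemma adj_last:
  assumes "d \<ge> 1"
  shows "adj_mat (cartan_mat C d d) $$ (d-1,d-1) = detX C d (d-1)"
proof -
  obtain e where e: "d = Suc e" using assms by (cases d) auto
  have "(-1::int)^(e+e) = 1" by (simp add: mult_2[symmetric])
  thus ?thesis unfolding e using delete_last[of C "Suc e" e]
    by (simp add: adj_mat_def cartan_mat_def cofactor_def detX_def)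
qed

lemma map_mult_idx:
  fixes P Q :: "int mat"
  assumes "P \<in> carrier_mat n n" "Q \<in> carrier_mat n n" "i < n" "j < n"
  shows "(map_mat (of_int :: int \<Rightarrow> rat) P * map_mat of_int Q) $$ (i,j) = of_int (\<Sum>k<n. P $$ (i,k) * Q $$ (k,j))"
  using assms by (simp add: scalar_prod_def lessThan_atLeast0 of_int_sum)

lemma a_coef_link:
  assumes d1: "d \<ge> 1" and D0: "detX C d d \<noteq> 0" and i: "1 \<le> i" "i \<le> d"
  shows "a_coef C d i = of_int (adj_mat (cartan_mat C d d) $$ (d-1, i-1))"
proof -
  define M where "M = cartan_mat C d d"
  define A where "A = adj_mat M"
  define D where "D = detX C d d"
  have M: "M \<in> carrier_mat d d" unfolding M_def by (rule cartan_mat_carrier)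
  have A: "A \<in> carrier_mat d d" unfolding A_def using adj_mat(1)[OF M] .
  define Mq where "Mq = map_mat (of_int :: int \<Rightarrow> rat) M"
  define Aq where "Aq = map_mat (of_int :: int \<Rightarrow> rat) A"
  have Mq: "Mq \<in> carrier_mat d d" and Aq: "Aq \<in> carrier_mat d d" using M A unfolding Mq_def Aq_def by auto
  have AM: "Aq * Mq = of_int D \<cdot>\<^sub>m 1\<^sub>m d"
  proof (rule eq_matI)
    fix i j assume ij: "i < dim_row (of_int D \<cdot>\<^sub>m 1\<^sub>m d :: rat mat)" "j < dim_col (of_int D \<cdot>\<^sub>m 1\<^sub>m d :: rat mat)"
    hence ij': "i < d" "j < d" by auto
    show "(Aq * Mq) $$ (i,j) = (of_int D \<cdot>\<^sub>m 1\<^sub>m d :: rat mat) $$ (i,j)"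
      unfolding Aq_def Mq_def using map_mult_idx[OF A M ij'] adj_left[OF M ij'] ij'
      unfolding A_def D_def M_def detX_def by simp
  qed (use Aq Mq in auto)
  have MA: "Mq * ((1 / of_int D) \<cdot>\<^sub>m Aq) = 1\<^sub>m d"
  proof (rule eq_matI)
    fix i j assume ij: "i < dim_row (1\<^sub>m d :: rat mat)" "j < dim_col (1\<^sub>m d :: rat mat)"
    hence ij': "i < d" "j < d" by auto
    have "(Mq * ((1 / of_int D) \<cdot>\<^sub>m Aq)) $$ (i,j) = (1 / of_int D) * (Mq * Aq) $$ (i,j)"
      using Mq Aq ij' by (simp add: mult_smult_distrib)
    also have "(Mq * Aq) $$ (i,j) = of_int (if i = j then D else 0)"
      unfolding Aq_def Mq_def using map_mult_idx[OF M A ij'] adj_right[OF M ij']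
      unfolding A_def D_def M_def detX_def by simp
    finally show "(Mq * ((1 / of_int D) \<cdot>\<^sub>m Aq)) $$ (i,j) = 1\<^sub>m d $$ (i,j)"
      using ij' D0 unfolding D_def by simp
  qed (use Aq Mq in auto)
  have ex: "\<exists>B :: rat mat. B \<in> carrier_mat d d \<and> map_mat of_int (cartan_mat C d d) * B = 1\<^sub>m d"
  proof (intro exI conjI)
    show "(1 / of_int D) \<cdot>\<^sub>m Aq \<in> carrier_mat d d" using Aq by simp
    show "map_mat of_int (cartan_mat C d d) * ((1 / of_int D) \<cdot>\<^sub>m Aq) = 1\<^sub>m d"
      using MA unfolding Mq_def M_def .
  qed
  define B where "B = cartan_inv C d"
  have B: "B \<in> carrier_mat d d" "Mq * B = 1\<^sub>m d"
    using someI_ex[OF ex] unfolding B_def cartan_inv_def Mq_def M_def by auto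
  have "Aq = Aq * (Mq * B)" using B Aq by simp
  also have "\<dots> = (Aq * Mq) * B" using B Aq Mq by (simp add: assoc_mult_mat)
  also have "\<dots> = of_int D \<cdot>\<^sub>m B" unfolding AM using B by (simp add: mult_smult_assoc_mat[OF one_carrier_mat B(1)])
  finally have "Aq $$ (d-1,i-1) = (of_int D \<cdot>\<^sub>m B) $$ (d-1,i-1)" by simp
  hence "of_int (A $$ (d-1,i-1)) = of_int D * B $$ (d-1,i-1)"
    using B A d1 i unfolding Aq_def by simp
  thus ?thesis unfolding a_coef_def B_def D_def A_def M_def using i by simp
qed

lemma coprime_prev:
  assumes "extensible C d" "d \<ge> 1"
  shows "coprime (detX C d d) (detX C d (d-1))"
proof -
  have "detX C d (d-1) = detX C d d - Delta C d"
    using det_closed[OF assms(2), of "d-1" C] assms(2) by (simp add: of_nat_diff)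
  moreover have "gcd (Delta C d) (detX C d d) = 1" using assms(1) unfolding extensible_def by simp
  moreover have "gcd (detX C d d - Delta C d) (detX C d d) = gcd (Delta C d) (detX C d d)" by (rule gcd_diff2)
  ultimately show ?thesis
    by (simp add: coprime_iff_gcd_eq_1 gcd.commute)
qed

lemma ell_bound:
  assumes "fin_supp x" "i > ell x"
  shows "x i = 0"
proof (rule ccontr)
  assume "x i \<noteq> 0"
  have fin: "finite ({0} \<union> {i. 1 \<le> i \<and> x i \<noteq> 0})"
    using assms(1) unfolding fin_supp_def by (auto intro: finite_subset)
  have "i \<in> {0} \<union> {i. 1 \<le> i \<and> x i \<noteq> 0}" using \<open>x i \<noteq> 0\<close> assms(2) by auto
  hence "i \<le> ell x" unfolding ell_def using Max_ge[OF fin] by blast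
  thus False using assms(2) by simp
qed

lemma rowsum:
  assumes d1: "d \<ge> 1" and dn: "d \<le> n" and j: "1 \<le> j" "j \<le> n"
  shows "(\<Sum>i=1..n. cartan_ext C d j i * c i) =
    (if j \<le> d then (\<Sum>i=1..d. C j i * c i) else 2 * c j - c (j-1))
    - (if d \<le> j \<and> j+1 \<le> n then c (j+1) else 0)"
proof (cases "j \<le> d")
  case True
  have split: "{1..n} = {1..d} \<union> {Suc d..n}" using d1 dn by auto
  have "(\<Sum>i=1..n. cartan_ext C d j i * c i) = (\<Sum>i=1..d. cartan_ext C d j i * c i) + (\<Sum>i=Suc d..n. cartan_ext C d j i * c i)"
    unfolding split by (rule sum.union_disjoint) auto
  also have "(\<Sum>i=1..d. cartan_ext C d j i * c i) = (\<Sum>i=1..d. C j i * c i)"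
    using True by (intro sum.cong) (auto simp: cartan_ext_def)
  also have "(\<Sum>i=Suc d..n. cartan_ext C d j i * c i) = (\<Sum>i=Suc d..n. if i = Suc d then (if j = d then - c i else 0) else 0)"
    using True by (intro sum.cong) (auto simp: cartan_ext_def)
  also have "\<dots> = (if d \<le> j \<and> j+1 \<le> n then - c (j+1) else 0)"
    using True by (simp add: sum.delta)
  finally show ?thesis using True by simp
next
  case False
  have "(\<Sum>i=1..n. cartan_ext C d j i * c i) = (\<Sum>i=1..n. (if i = j then 2 * c i else 0) + (if i = j - 1 then - c i else 0)
      + (if i = j + 1 then - c i else 0))"
    using False by (intro sum.cong) (auto simp: cartan_ext_def)
  also have "\<dots> = 2 * c j - c (j-1) - (if j+1 \<le> n then c (j+1) else 0)"
  proof -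
    have h: "Suc 0 \<le> j - Suc 0" "j - Suc 0 \<le> n" using False j d1 by auto
    show ?thesis using False j d1 h by (simp add: sum.distrib sum.delta)
  qed
  finally show ?thesis using False by simp
qed

definition Qf :: "(nat \<Rightarrow> int) \<Rightarrow> nat \<Rightarrow> nat \<Rightarrow> int" where
  "Qf y r k = (\<Sum>m=1..r. int (min k m) * y m)"

definition Gf :: "(nat \<Rightarrow> int) \<Rightarrow> nat \<Rightarrow> nat \<Rightarrow> int" where
  "Gf x l i = - (\<Sum>k=1..l. int (k - i) * x k)"

lemma Q_diff:
  assumes k: "1 \<le> k" and y: "\<forall>m>r. y m = 0"
  shows "2 * Qf y r k - Qf y r (k+1) - Qf y r (k-1) = y k"
proof -
  have "2 * Qf y r k - Qf y r (k+1) - Qf y r (k-1) =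
     (\<Sum>m=1..r. (2 * int (min k m) - int (min (k+1) m) - int (min (k-1) m)) * y m)"
    unfolding Qf_def by (simp add: sum_subtractf sum_distrib_left sum.distrib algebra_simps)
  also have "\<dots> = (\<Sum>m=1..r. if m = k then y m else 0)"
  proof (intro sum.cong refl)
    fix m
    have "2 * int (min k m) - int (min (k+1) m) - int (min (k-1) m) = (if m = k then 1 else 0)"
      using k by (cases "m < k"; cases "m = k") auto
    thus "(2 * int (min k m) - int (min (k+1) m) - int (min (k-1) m)) * y m = (if m = k then y m else 0)"
      by simp
  qed
  also have "\<dots> = y k" using y k by (auto simp: sum.delta)
  finally show ?thesis .
qed

lemma G_diff:
  assumes j: "1 \<le> j" and x: "\<forall>k>l. x k = 0"
  shows "2 * Gf x l j - Gf x l (j-1) - Gf x l (j+1) = x j"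
proof -
  have "2 * Gf x l j - Gf x l (j-1) - Gf x l (j+1) =
     (\<Sum>k=1..l. (int (k - (j-1)) + int (k - (j+1)) - 2 * int (k - j)) * x k)"
    unfolding Gf_def by (simp add: sum_subtractf sum.distrib sum_distrib_left algebra_simps)
  also have "\<dots> = (\<Sum>k=1..l. if k = j then x k else 0)"
  proof (intro sum.cong refl)
    fix k
    have "int (k - (j-1)) + int (k - (j+1)) - 2 * int (k - j) = (if k = j then 1 else 0)"
      using j by (cases "k < j"; cases "k = j") auto
    thus "(int (k - (j-1)) + int (k - (j+1)) - 2 * int (k - j)) * x k = (if k = j then x k else 0)"
      by simp
  qed
  also have "\<dots> = x j" using x j by (auto simp: sum.delta)
  finally show ?thesis .
qed

theorem proposition4p1:
  fixes C :: "nat \<Rightarrow> nat \<Rightarrow> int" and d :: nat and x y :: "nat \<Rightarrow> int"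
  assumes "d \<ge> 1"
    and "is_gcm C d" and "symmetrizable C d"
    and "extensible C d"
    and "fin_supp x" and "fin_supp y"
    and "gamma_norm C d x y = 0"
  shows "\<exists>(p :: nat \<Rightarrow> int) (q :: nat \<Rightarrow> int) (s :: int).
           \<forall>n \<ge> max (ell x) d + ell y.
             is_root_combination C d n (gamma_coef x y n)
               (\<lambda>i. if i \<le> max (ell x) d - 1 then p i
                    else if i \<le> n + 1 - ell y then s
                    else q (n - i + 1))"
proof -
  define l where "l = max (ell x) d"
  define r where "r = ell y"
  define D where "D = detX C d d"
  define Dl where "Dl = Delta C d"
  define A where "A = adj_mat (cartan_mat C d d)"
  have d1: "d \<ge> 1" using assms(1) .
  have D0: "D \<noteq> 0" using assms(4) unfolding extensible_def D_def by simp
  have cop: "coprime D (detX C d (d-1))" using coprime_prev[OF assms(4) d1] unfolding D_def .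
  have x0: "\<forall>k>l. x k = 0" using ell_bound[OF assms(5)] unfolding l_def by auto
  have x0': "\<forall>k>ell x. x k = 0" using ell_bound[OF assms(5)] by auto
  have y0: "\<forall>m>r. y m = 0" using ell_bound[OF assms(6)] unfolding r_def by auto
  have dl: "d \<le> l" "ell x \<le> l" unfolding l_def by auto
  define s where "s = (\<Sum>m=1..r. int m * y m)"
  have Qs: "Qf y r k = s" if "k \<ge> r" for k
    unfolding Qf_def s_def using that by (intro sum.cong) auto
  have Q0: "Qf y r 0 = 0" unfolding Qf_def by simp
  have G0: "Gf x l i = 0" if "i \<ge> l" for i
    unfolding Gf_def using that by (auto intro!: sum.neutral)
  define t where "t = s + Gf x l d"
  define u where "u = s + Gf x l (d+1)"
  define b where "b k = x (k+1) + (if k = d-1 then u else 0)" for k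
  define al where "al i = (if i \<le> d then A $$ (d-1,i-1) else D + (int (i-d) - 1) * Dl)" for i
  have hyp_int: "(\<Sum>i=1..l. al i * x i) = Dl * s"
  proof -
    have g: "(\<Sum>i=1..ell x. a_coef C d i * of_int (x i)) - of_int Dl * of_int s = 0"
      using assms(7) unfolding gamma_norm_def Dl_def s_def r_def .
    have "(\<Sum>i=1..ell x. a_coef C d i * of_int (x i)) = (\<Sum>i=1..l. a_coef C d i * of_int (x i))"
      using dl x0' by (intro sum.mono_neutral_left) auto
    also have "\<dots> = (\<Sum>i=1..l. of_int (al i * x i))"
    proof (intro sum.cong refl)
      fix i assume i: "i \<in> {1..l}"
      show "a_coef C d i * of_int (x i) = of_int (al i * x i)"
      proof (cases "i \<le> d")
        case True
        thus ?thesis using a_coef_link[OF d1 D0[unfolded D_def], of i] i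
          unfolding al_def A_def by simp
      next
        case False
        have "detX C d (i-1) = D + (int (i-1) - int d) * Dl"
          using det_closed[OF d1, of "i-1" C] False unfolding D_def Dl_def by simp
        moreover have "int (i-1) - int d = int (i-d) - 1" using False by simp
        ultimately show ?thesis using False unfolding a_coef_def al_def by simp
      qed
    qed
    finally have "of_int (\<Sum>i=1..l. al i * x i) = (of_int (Dl * s) :: rat)"
      using g by (simp add: of_int_sum)
    thus ?thesis by (simp only: of_int_eq_iff)
  qed
  have key: "(\<Sum>i<d. A $$ (d-1, i) * b i) = t * D"
  proof -
    have "(\<Sum>i<d. A $$ (d-1, i) * b i) = (\<Sum>i<d. A $$ (d-1, i) * x (i+1) + (if i = d-1 then A $$ (d-1,i) * u else 0))"
      unfolding b_def by (intro sum.cong) (auto simp: algebra_simps)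
    also have "\<dots> = (\<Sum>i<d. A $$ (d-1, i) * x (i+1)) + A $$ (d-1,d-1) * u"
      using d1 by (simp add: sum.distrib sum.delta)
    also have "A $$ (d-1,d-1) = D - Dl"
      using adj_last[OF d1, of C] det_closed[OF d1, of "d-1" C] d1 unfolding A_def D_def Dl_def
      by (simp add: of_nat_diff)
    also have "(\<Sum>i<d. A $$ (d-1, i) * x (i+1)) = (\<Sum>i=1..d. A $$ (d-1, i-1) * x i)"
      by (simp add: sum.atLeast1_atMost_eq)
    finally have L: "(\<Sum>i<d. A $$ (d-1, i) * b i) = (\<Sum>i=1..d. A $$ (d-1, i-1) * x i) + (D - Dl) * u" .
    have "(\<Sum>i=1..l. al i * x i) = (\<Sum>i=1..l. (if i \<in> {..d} then A $$ (d-1,i-1) * x i else 0))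
       + (\<Sum>i=1..l. (D * int (i-d) - (D - Dl) * int (i - (d+1))) * x i)"
      unfolding al_def by (subst sum.distrib[symmetric], intro sum.cong refl) (auto simp: algebra_simps)
    also have "(\<Sum>i=1..l. (if i \<in> {..d} then A $$ (d-1,i-1) * x i else 0)) = (\<Sum>i=1..d. A $$ (d-1, i-1) * x i)"
    proof -
      have e: "{1..l} \<inter> {..d} = {1..d}" using dl by auto
      have "(\<Sum>i\<in>{1..l} \<inter> {..d}. A $$ (d-1,i-1) * x i) = (\<Sum>i=1..l. (if i \<in> {..d} then A $$ (d-1,i-1) * x i else 0))"
        by (rule sum.inter_restrict) simp
      thus ?thesis unfolding e by simp
    qed
    also have "(\<Sum>i=1..l. (D * int (i-d) - (D - Dl) * int (i - (d+1))) * x i)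
       = - D * Gf x l d + (D - Dl) * Gf x l (d+1)"
      unfolding Gf_def by (simp add: algebra_simps sum_subtractf sum_distrib_left sum.distrib sum_negf)
    finally have "(\<Sum>i=1..d. A $$ (d-1, i-1) * x i) - D * Gf x l d + (D - Dl) * Gf x l (d+1) = Dl * s"
      using hyp_int by simp
    thus ?thesis unfolding L t_def u_def by (simp add: algebra_simps)
  qed
  obtain v where v: "v (d-1) = t" "\<forall>j<d. (\<Sum>k<d. cartan_mat C d d $$ (j,k) * v k) = b j"
    using base_solve[OF d1 D0[unfolded D_def] cop[unfolded D_def] key[unfolded A_def D_def]] by blast
  define p where "p i = (if i < d then v (i-1) else s + Gf x l i)" for i
  show ?thesis
  proof (rule exI[of _ p], rule exI[of _ "Qf y r"], rule exI[of _ s], intro allI impI)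
    fix n assume n: "n \<ge> max (ell x) d + ell y"
    hence nlr: "n \<ge> l + r" unfolding l_def r_def .
    define cc where "cc i = (if i < d then v (i-1) else Qf y r (n+1-i) + Gf x l i)" for i
    have cc_eq: "(if i \<le> max (ell x) d - 1 then p i else if i \<le> n + 1 - ell y then s else Qf y r (n - i + 1)) = cc i"
      if i: "1 \<le> i" "i \<le> n" for i
    proof -
      consider "i \<le> l - 1" | "\<not> i \<le> l - 1" "i \<le> n + 1 - r" | "\<not> i \<le> l - 1" "\<not> i \<le> n + 1 - r" by blast
      thus ?thesis
      proof cases
        case 1
        thus ?thesis using Qs[of "n+1-i"] nlr i unfolding l_def[symmetric] r_def[symmetric] p_def cc_def by auto
      next
        case 2
        thus ?thesis using Qs[of "n+1-i"] G0[of i] nlr i dl unfolding l_def[symmetric] r_def[symmetric] cc_def by auto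
      next
        case 3
        moreover have "n - i + 1 = n + 1 - i" using i by simp
        ultimately show ?thesis using G0[of i] nlr i dl unfolding l_def[symmetric] r_def[symmetric] cc_def by auto
      qed
    qed
    show "is_root_combination C d n (gamma_coef x y n)
               (\<lambda>i. if i \<le> max (ell x) d - 1 then p i
                    else if i \<le> n + 1 - ell y then s
                    else Qf y r (n - i + 1))"
      unfolding is_root_combination_def
    proof
      fix j assume jn: "j \<in> {1..n}"
      hence j: "1 \<le> j" "j \<le> n" by auto
      have dn: "d \<le> n" using nlr dl by simp
      have "(\<Sum>i=1..n. cartan_ext C d j i * (if i \<le> max (ell x) d - 1 then p i
                    else if i \<le> n + 1 - ell y then s else Qf y r (n - i + 1)))
          = (\<Sum>i=1..n. cartan_ext C d j i * cc i)"
        using cc_eq by (intro sum.cong) auto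
      also have "\<dots> = (if j \<le> d then (\<Sum>i=1..d. C j i * cc i) else 2 * cc j - cc (j-1))
          - (if d \<le> j \<and> j+1 \<le> n then cc (j+1) else 0)"
        by (rule rowsum[OF d1 dn j])
      also have "\<dots> = x j + y (n + 1 - j)"
      proof (cases "j \<le> d")
        case True
        have ccv: "cc (Suc k) = v k" if "k < d" for k
        proof (cases "Suc k < d")
          case True thus ?thesis unfolding cc_def by simp
        next
          case False
          hence "k = d - 1" using that by simp
          thus ?thesis using Qs[of "n+1-Suc k"] nlr dl v(1) that unfolding cc_def t_def by auto
        qed
        have "(\<Sum>i=1..d. C j i * cc i) = (\<Sum>k<d. C j (Suc k) * cc (Suc k))"
          by (simp add: sum.atLeast1_atMost_eq)
        also have "\<dots> = (\<Sum>k<d. cartan_mat C d d $$ (j-1,k) * v k)"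
          using True j ccv by (intro sum.cong) (auto simp: cartan_mat_idx cartan_ext_def)
        also have "\<dots> = b (j-1)" using v(2) True j by auto
        finally have S: "(\<Sum>i=1..d. C j i * cc i) = x j + (if j = d then u else 0)"
          unfolding b_def using j True d1 by auto
        have T: "(if d \<le> j \<and> j+1 \<le> n then cc (j+1) else 0) = (if j = d then u else 0)"
        proof (cases "j = d")
          case True
          show ?thesis
          proof (cases "d + 1 \<le> n")
            case True
            thus ?thesis using \<open>j = d\<close> Qs[of "n - d"] nlr dl unfolding cc_def u_def by auto
          next
            case False
            hence "n = d" "l = d" "r = 0" using nlr dl dn by auto
            hence "u = 0" unfolding u_def s_def using G0[of "d+1"] by simp
            thus ?thesis using \<open>j = d\<close> False by simp
          qed
        qed (use True in auto)
        have "y (n + 1 - j) = 0" using y0 nlr dl True by auto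
        thus ?thesis using S T True by simp
      next
        case False
        have k1: "1 \<le> n + 1 - j" using j by simp
        have e1: "cc j = Qf y r (n+1-j) + Gf x l j" using False unfolding cc_def by simp
        have e2: "cc (j-1) = Qf y r (n+1-j+1) + Gf x l (j-1)"
          using False j unfolding cc_def by (auto simp: Suc_diff_le)
        have e3: "(if d \<le> j \<and> j+1 \<le> n then cc (j+1) else 0) = Qf y r (n+1-j-1) + Gf x l (j+1)"
        proof (cases "j + 1 \<le> n")
          case True thus ?thesis using False unfolding cc_def by auto
        next
          case False
          hence "j = n" using j by simp
          thus ?thesis using Q0 G0[of "n+1"] nlr by simp
        qed
        show ?thesis using False e1 e2 e3 Q_diff[OF k1 y0] G_diff[OF j(1) x0] by (simp add: algebra_simps)
      qed
      finally have FIN: "x j + y (n + 1 - j) = (\<Sum>i=1..n. cartan_ext C d j i * (if i \<le> max (ell x) d - 1 then p i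
                    else if i \<le> n + 1 - ell y then s else Qf y r (n - i + 1)))" by simp
      thus "gamma_coef x y n j = (\<Sum>i=1..n. cartan_ext C d j i * (if i \<le> max (ell x) d - 1 then p i
                    else if i \<le> n + 1 - ell y then s else Qf y r (n - i + 1)))" unfolding gamma_coef_def .
    qed
  qed
qed

end
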